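(* Let $1/n\ll\gamma\ll\tau\ll\alpha\ll 1$, let $k\in\mathbb{N}$, and let $G$ be a $d$-regular digraph on $n$ vertices with $d\geq\alpha n$. Suppose $\mathcal{P}_k=\{V_{ij}:i,j\in[k]\}$ is an extremal $(k^2,\tau,\gamma)$-partition of $G$. Then for all $i,j\in[k]$ and every $w\in V_{ij}$ we have $d^+_{V_{*i'}}(w)\leq d^+_{V_{*i}}(w)$ and $d^-_{V_{j'*}}(w)\leq d^-_{V_{j*}}(w)$ for all $i',j'\in[k]$. In particular, $d^-_{V_{j'*}}(w),\,d^+_{V_{*i'}}(w)\leq d/2$ for all $i'\neq i$ and $j'\neq j$, and $d^+_{\mathcal{G}_k(\mathcal{P}_k,G)}(v),\,d^-_{\mathcal{G}_k(\mathcal{P}_k,G)}(v)\geq d/k$ for all $v\in V(G)$.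
   Context: Hierarchy convention: $x\ll y$ means $x\leq f(y)$ for some implicitly given non-decreasing function $f:(0,1]\to(0,1]$; the statement asserts such functions exist, constants chosen from right to left. $d$-regular: all in- and outdegrees equal $d$. For $S\subseteq V(G)$, $d^+_S(v)=|N^+(v)\cap S|$ and $d^-_S(v)=|N^-(v)\cap S|$. A $k^2$-partition of $V(G)$ is a family $\{V_{ij}:i,j\in[k]\}$ of pairwise disjoint (possibly empty) sets with union $V(G)$; $V_{i*}=\bigcup_j V_{ij}$, $V_{*j}=\bigcup_i V_{ij}$. $E(A,B)$ is the set of edges $ab$ with $a\in A,b\in B$. Good edges: $\mathcal{G}_k(\mathcal{P}_k,G)=\bigcup_i E(V_{i*},V_{*i})$; bad edges: $\mathcal{B}_k(\mathcal{P}_k,G)=\bigcup_{i\neq j}E(V_{i*},V_{*j})$. $d^{\pm}_{\mathcal{G}_k(\mathcal{P}_k,G)}(v)$ denotes the out/indegree of $v$ in the spanning subdigraph with edge set $\mathcal{G}_k(\mathcal{P}_k,G)$. A $(k^2,\tau,\gamma)$-partition of an $n$-vertex digraph is a $k^2$-partition with $|\mathcal{B}_k(\mathcal{P}_k,G)|\leq\gamma n^2$ and $|V_{i*}|,|V_{*j}|\geq\tau n$ for all $i,j$. It is extremal if $|\mathcal{B}_k(\mathcal{P}_k,G)|\leq|\mathcal{B}_k(\mathcal{P}'_k,G)|$ for every $(k^2,\tau,\gamma)$-partition $\mathcal{P}'_k$ of $V(G)$. *)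

theory Defs
  imports Complex_Main
begin

definition digraph :: "'a set \<Rightarrow> ('a \<times> 'a) set \<Rightarrow> bool" where
  "digraph V E \<longleftrightarrow> finite V \<and> E \<subseteq> V \<times> V \<and> (\<forall>v. (v, v) \<notin> E)"

definition outdeg_in :: "('a \<times> 'a) set \<Rightarrow> 'a set \<Rightarrow> 'a \<Rightarrow> nat" where
  "outdeg_in E S v = card {u \<in> S. (v, u) \<in> E}"

definition indeg_in :: "('a \<times> 'a) set \<Rightarrow> 'a set \<Rightarrow> 'a \<Rightarrow> nat" where
  "indeg_in E S v = card {u \<in> S. (u, v) \<in> E}"

definition regular_digraph :: "'a set \<Rightarrow> ('a \<times> 'a) set \<Rightarrow> nat \<Rightarrow> bool" where
  "regular_digraph V E d \<longleftrightarrow> digraph V E \<and>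
     (\<forall>v\<in>V. outdeg_in E V v = d \<and> indeg_in E V v = d)"

definition k2_partition :: "'a set \<Rightarrow> nat \<Rightarrow> (nat \<Rightarrow> nat \<Rightarrow> 'a set) \<Rightarrow> bool" where
  "k2_partition V k P \<longleftrightarrow>
     (\<forall>i\<in>{1..k}. \<forall>j\<in>{1..k}. \<forall>i'\<in>{1..k}. \<forall>j'\<in>{1..k}.
        (i, j) \<noteq> (i', j') \<longrightarrow> P i j \<inter> P i' j' = {}) \<and>
     (\<Union>i\<in>{1..k}. \<Union>j\<in>{1..k}. P i j) = V"

definition Vrow :: "nat \<Rightarrow> (nat \<Rightarrow> nat \<Rightarrow> 'a set) \<Rightarrow> nat \<Rightarrow> 'a set" where
  "Vrow k P i = (\<Union>j\<in>{1..k}. P i j)"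

definition Vcol :: "nat \<Rightarrow> (nat \<Rightarrow> nat \<Rightarrow> 'a set) \<Rightarrow> nat \<Rightarrow> 'a set" where
  "Vcol k P j = (\<Union>i\<in>{1..k}. P i j)"

definition edges_between :: "('a \<times> 'a) set \<Rightarrow> 'a set \<Rightarrow> 'a set \<Rightarrow> ('a \<times> 'a) set" where
  "edges_between E A B = {(a, b) \<in> E. a \<in> A \<and> b \<in> B}"

definition good_edges :: "nat \<Rightarrow> (nat \<Rightarrow> nat \<Rightarrow> 'a set) \<Rightarrow> ('a \<times> 'a) set \<Rightarrow> ('a \<times> 'a) set" where
  "good_edges k P E = (\<Union>i\<in>{1..k}. edges_between E (Vrow k P i) (Vcol k P i))"

definition bad_edges :: "nat \<Rightarrow> (nat \<Rightarrow> nat \<Rightarrow> 'a set) \<Rightarrow> ('a \<times> 'a) set \<Rightarrow> ('a \<times> 'a) set" where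
  "bad_edges k P E = (\<Union>i\<in>{1..k}. \<Union>j\<in>{1..k}.
      if i = j then {} else edges_between E (Vrow k P i) (Vcol k P j))"

definition ktg_partition ::
  "'a set \<Rightarrow> ('a \<times> 'a) set \<Rightarrow> nat \<Rightarrow> real \<Rightarrow> real \<Rightarrow> (nat \<Rightarrow> nat \<Rightarrow> 'a set) \<Rightarrow> bool" where
  "ktg_partition V E k \<tau> \<gamma> P \<longleftrightarrow> k2_partition V k P \<and>
     real (card (bad_edges k P E)) \<le> \<gamma> * real (card V) ^ 2 \<and>
     (\<forall>i\<in>{1..k}. real (card (Vrow k P i)) \<ge> \<tau> * real (card V) \<and>
                  real (card (Vcol k P i)) \<ge> \<tau> * real (card V))"

definition extremal_ktg_partition ::
  "'a set \<Rightarrow> ('a \<times> 'a) set \<Rightarrow> nat \<Rightarrow> real \<Rightarrow> real \<Rightarrow> (nat \<Rightarrow> nat \<Rightarrow> 'a set) \<Rightarrow> bool" where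
  "extremal_ktg_partition V E k \<tau> \<gamma> P \<longleftrightarrow> ktg_partition V E k \<tau> \<gamma> P \<and>
     (\<forall>P'. ktg_partition V E k \<tau> \<gamma> P' \<longrightarrow> card (bad_edges k P E) \<le> card (bad_edges k P' E))"

end

theory Submission
  imports Defs
begin

lemma k2_uniq:
  assumes "k2_partition V k P" "x\<in>{1..k}" "y\<in>{1..k}" "x'\<in>{1..k}" "y'\<in>{1..k}"
    "a \<in> P x y" "a \<in> P x' y'"
  shows "x = x' \<and> y = y'"
  using assms unfolding k2_partition_def by blast

lemma k2_sub: "k2_partition V k P \<Longrightarrow> x\<in>{1..k} \<Longrightarrow> y\<in>{1..k} \<Longrightarrow> P x y \<subseteq> V"
  unfolding k2_partition_def by blast

lemma k2_cover: "k2_partition V k P \<Longrightarrow> a \<in> V \<Longrightarrow> \<exists>x\<in>{1..k}. \<exists>y\<in>{1..k}. a \<in> P x y"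
  unfolding k2_partition_def by blast

lemma row_uniq: "k2_partition V k P \<Longrightarrow> x\<in>{1..k} \<Longrightarrow> x'\<in>{1..k} \<Longrightarrow>
   a \<in> Vrow k P x \<Longrightarrow> a \<in> Vrow k P x' \<Longrightarrow> x = x'"
  unfolding Vrow_def proof -
  assume h: "k2_partition V k P" "x\<in>{1..k}" "x'\<in>{1..k}" "a \<in> (\<Union>j\<in>{1..k}. P x j)" "a \<in> (\<Union>j\<in>{1..k}. P x' j)"
  then obtain y y' where "y\<in>{1..k}" "y'\<in>{1..k}" "a \<in> P x y" "a \<in> P x' y'" by auto
  then show "x = x'" using k2_uniq[OF h(1) h(2) _ h(3)] by blast
qed

lemma col_uniq: "k2_partition V k P \<Longrightarrow> x\<in>{1..k} \<Longrightarrow> x'\<in>{1..k} \<Longrightarrow>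
   a \<in> Vcol k P x \<Longrightarrow> a \<in> Vcol k P x' \<Longrightarrow> x = x'"
  unfolding Vcol_def proof -
  assume h: "k2_partition V k P" "x\<in>{1..k}" "x'\<in>{1..k}" "a \<in> (\<Union>i\<in>{1..k}. P i x)" "a \<in> (\<Union>i\<in>{1..k}. P i x')"
  then obtain y y' where "y\<in>{1..k}" "y'\<in>{1..k}" "a \<in> P y x" "a \<in> P y' x'" by auto
  then show "x = x'" using k2_uniq[OF h(1) _ h(2) _ h(3)] by blast
qed

lemma row_sub: "k2_partition V k P \<Longrightarrow> x\<in>{1..k} \<Longrightarrow> Vrow k P x \<subseteq> V"
  unfolding Vrow_def proof
  fix a assume h: "k2_partition V k P" "x\<in>{1..k}" "a \<in> (\<Union>j\<in>{1..k}. P x j)"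
  then obtain y where "y\<in>{1..k}" "a \<in> P x y" by auto
  then show "a \<in> V" using k2_sub[OF h(1) h(2)] by auto
qed

lemma col_sub: "k2_partition V k P \<Longrightarrow> x\<in>{1..k} \<Longrightarrow> Vcol k P x \<subseteq> V"
  unfolding Vcol_def proof
  fix a assume h: "k2_partition V k P" "x\<in>{1..k}" "a \<in> (\<Union>i\<in>{1..k}. P i x)"
  then obtain y where "y\<in>{1..k}" "a \<in> P y x" by auto
  then show "a \<in> V" using k2_sub[OF h(1) _ h(2)] by auto
qed

lemma row_cover: "k2_partition V k P \<Longrightarrow> a \<in> V \<Longrightarrow> \<exists>x\<in>{1..k}. a \<in> Vrow k P x"
proof -
  assume h: "k2_partition V k P" "a \<in> V"
  then obtain x y where "x\<in>{1..k}" "y\<in>{1..k}" "a \<in> P x y" using k2_cover by metis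
  then show ?thesis unfolding Vrow_def by blast
qed

lemma col_cover: "k2_partition V k P \<Longrightarrow> a \<in> V \<Longrightarrow> \<exists>x\<in>{1..k}. a \<in> Vcol k P x"
proof -
  assume h: "k2_partition V k P" "a \<in> V"
  then obtain x y where "x\<in>{1..k}" "y\<in>{1..k}" "a \<in> P x y" using k2_cover by metis
  then show ?thesis unfolding Vcol_def by blast
qed

lemma bad_char:
  assumes "E \<subseteq> V \<times> V" "k2_partition V k P"
  shows "bad_edges k P E = {(a,b)\<in>E. \<forall>x\<in>{1..k}. a \<in> Vrow k P x \<longrightarrow> b \<notin> Vcol k P x}"
proof (intro equalityI subsetI)
  fix e assume "e \<in> bad_edges k P E"
  then obtain x y where xy: "x\<in>{1..k}" "y\<in>{1..k}" "x \<noteq> y" "e \<in> E" "fst e \<in> Vrow k P x" "snd e \<in> Vcol k P y"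
    unfolding bad_edges_def edges_between_def by (auto split: if_splits)
  show "e \<in> {(a,b)\<in>E. \<forall>x\<in>{1..k}. a \<in> Vrow k P x \<longrightarrow> b \<notin> Vcol k P x}"
  proof (cases e)
    case (Pair a b)
    have "\<forall>z\<in>{1..k}. a \<in> Vrow k P z \<longrightarrow> b \<notin> Vcol k P z"
    proof (intro ballI impI notI)
      fix z assume z: "z\<in>{1..k}" "a \<in> Vrow k P z" "b \<in> Vcol k P z"
      have "z = x" using row_uniq[OF assms(2) z(1) xy(1)] z(2) xy(5) Pair by simp
      moreover have "z = y" using col_uniq[OF assms(2) z(1) xy(2)] z(3) xy(6) Pair by simp
      ultimately show False using xy(3) by simp
    qed
    then show ?thesis using xy Pair by auto
  qed
next
  fix e assume e: "e \<in> {(a,b)\<in>E. \<forall>x\<in>{1..k}. a \<in> Vrow k P x \<longrightarrow> b \<notin> Vcol k P x}"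
  obtain a b where ab: "e = (a,b)" by (cases e)
  with e assms(1) have "a \<in> V" "b \<in> V" "(a,b) \<in> E" by auto
  then obtain x y where "x\<in>{1..k}" "y\<in>{1..k}" "a \<in> Vrow k P x" "b \<in> Vcol k P y"
    using row_cover[OF assms(2)] col_cover[OF assms(2)] by meson
  moreover have "x \<noteq> y" using e ab calculation by auto
  ultimately show "e \<in> bad_edges k P E" using ab \<open>(a,b)\<in>E\<close>
    unfolding bad_edges_def edges_between_def by force
qed

lemma good_out:
  assumes "E \<subseteq> V \<times> V" "k2_partition V k P" "i\<in>{1..k}" "v \<in> Vrow k P i"
  shows "outdeg_in (good_edges k P E) V v = outdeg_in E (Vcol k P i) v"
proof -
  have "{u \<in> V. (v, u) \<in> good_edges k P E} = {u \<in> Vcol k P i. (v, u) \<in> E}"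
    using assms row_uniq[OF assms(2)] col_sub[OF assms(2)]
    unfolding good_edges_def edges_between_def by blast
  then show ?thesis unfolding outdeg_in_def by simp
qed

definition tr :: "(nat \<Rightarrow> nat \<Rightarrow> 'a set) \<Rightarrow> (nat \<Rightarrow> nat \<Rightarrow> 'a set)" where
  "tr P = (\<lambda>a b. P b a)"

lemma tr_app: "tr P a b = P b a" unfolding tr_def by simp
lemma tr_tr[simp]: "tr (tr P) = P" unfolding tr_def by simp
lemma row_tr[simp]: "Vrow k (tr P) x = Vcol k P x" unfolding tr_def Vrow_def Vcol_def by simp
lemma col_tr[simp]: "Vcol k (tr P) x = Vrow k P x" unfolding tr_def Vrow_def Vcol_def by simp
lemma indeg_conv: "indeg_in E S v = outdeg_in (E\<inverse>) S v"
  unfolding indeg_in_def outdeg_in_def by simp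
lemma outdeg_conv: "outdeg_in E S v = indeg_in (E\<inverse>) S v"
  unfolding indeg_in_def outdeg_in_def by simp
lemma k2_tr[simp]: "k2_partition V k (tr P) = k2_partition V k P"
  unfolding k2_partition_def tr_def by blast
lemma bad_tr[simp]: "bad_edges k (tr P) (E\<inverse>) = (bad_edges k P E)\<inverse>"
  unfolding bad_edges_def edges_between_def by (auto split: if_splits)
lemma good_tr[simp]: "good_edges k (tr P) (E\<inverse>) = (good_edges k P E)\<inverse>"
  unfolding good_edges_def edges_between_def by auto
lemma ktg_tr[simp]: "ktg_partition V (E\<inverse>) k t g (tr P) = ktg_partition V E k t g P"
  unfolding ktg_partition_def by auto
lemma ktg_tr'[simp]: "ktg_partition V E k t g (tr P) = ktg_partition V (E\<inverse>) k t g P"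
  by (metis ktg_tr tr_tr converse_converse)
lemma ext_tr[simp]: "extremal_ktg_partition V (E\<inverse>) k t g (tr P) = extremal_ktg_partition V E k t g P"
  unfolding extremal_ktg_partition_def
  by (metis ktg_tr' bad_tr card_inverse tr_tr converse_converse)
lemma reg_tr[simp]: "regular_digraph V (E\<inverse>) d = regular_digraph V E d"
  unfolding regular_digraph_def digraph_def indeg_conv by auto


lemma card_minus1: "finite A \<Longrightarrow> card A \<le> card (A - {w}) + 1"
proof (cases "w \<in> A")
  case True
  assume f: "finite A"
  then have "card A > 0" using True card_gt_0_iff by blast
  then show ?thesis using card_Diff_singleton[OF True] by simp
next
  case False
  then show ?thesis by simp
qed

lemma out_split:
  assumes "regular_digraph V E d" "w \<in> V" "S \<subseteq> V"
  shows "card {(a,b)\<in>E. a = w \<and> b \<notin> S} + outdeg_in E S w = d"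
proof -
  have EV: "E \<subseteq> V \<times> V" and fin: "finite V" using assms(1) unfolding regular_digraph_def digraph_def by auto
  have "{(a,b)\<in>E. a = w \<and> b \<notin> S} = Pair w ` {b\<in>V. (w,b)\<in>E \<and> b\<notin>S}" using EV by auto
  then have c1: "card {(a,b)\<in>E. a = w \<and> b \<notin> S} = card {b\<in>V. (w,b)\<in>E \<and> b\<notin>S}"
    by (simp add: card_image inj_on_def)
  have "{b\<in>V. (w,b)\<in>E} = {b\<in>V. (w,b)\<in>E \<and> b\<notin>S} \<union> {b\<in>S. (w,b)\<in>E}" using assms(3) by auto
  moreover have "card {b\<in>V. (w,b)\<in>E} = d" using assms(1,2) unfolding regular_digraph_def outdeg_in_def by auto
  moreover have "finite S" by (rule finite_subset[OF assms(3) fin])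
  moreover have "card ({b\<in>V. (w,b)\<in>E \<and> b\<notin>S} \<union> {b\<in>S. (w,b)\<in>E}) = card {b\<in>V. (w,b)\<in>E \<and> b\<notin>S} + card {b\<in>S. (w,b)\<in>E}"
    by (rule card_Un_disjoint) (use fin \<open>finite S\<close> in auto)
  ultimately have "d = card {b\<in>V. (w,b)\<in>E \<and> b\<notin>S} + card {b\<in>S. (w,b)\<in>E}"
    by simp
  then show ?thesis using c1 unfolding outdeg_in_def by simp
qed

lemma move_out:
  assumes reg: "regular_digraph V E d" and ext: "extremal_ktg_partition V E k \<tau> \<gamma> P"
    and big: "\<forall>x\<in>{1..k}. real (card (Vrow k P x)) \<ge> \<tau> * real (card V) + 1"
    and ij: "i\<in>{1..k}" "j\<in>{1..k}" "w \<in> P i j" "i'\<in>{1..k}"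
  shows "outdeg_in E (Vcol k P i') w \<le> outdeg_in E (Vcol k P i) w"
proof (rule ccontr)
  assume lt: "\<not> ?thesis"
  hence ne: "i' \<noteq> i" by auto
  have EV: "E \<subseteq> V \<times> V" and fin: "finite V" using reg unfolding regular_digraph_def digraph_def by auto
  have finE: "finite E" by (rule finite_subset[OF EV]) (use fin in simp)
  have ktg: "ktg_partition V E k \<tau> \<gamma> P" using ext unfolding extremal_ktg_partition_def by auto
  have k2: "k2_partition V k P" using ktg unfolding ktg_partition_def by auto
  have wV: "w \<in> V" using k2_sub[OF k2 ij(1,2)] ij(3) by auto
  have wrow: "w \<in> Vrow k P i" using ij unfolding Vrow_def by auto
  define Q where "Q = (\<lambda>a b. if a = i \<and> b = j then P i j - {w} else if a = i' \<and> b = j then insert w (P i' j) else P a b)"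
  have memQ: "z \<in> Q a b \<longleftrightarrow> (if z = w then a = i' \<and> b = j else z \<in> P a b)"
    if "a\<in>{1..k}" "b\<in>{1..k}" for z a b
  proof (cases "z = w")
    case True
    have u: "w \<in> P a b \<Longrightarrow> a = i \<and> b = j" by (rule k2_uniq[OF k2 that ij(1,2) _ ij(3)])
    consider (c1) "a = i \<and> b = j" | (c2) "a = i' \<and> b = j" | (c3) "\<not>(a = i \<and> b = j)" "\<not>(a = i' \<and> b = j)" by blast
    then show ?thesis
    proof cases
      case c1 then show ?thesis using True ne by (simp add: Q_def)
    next
      case c2 then show ?thesis using True ne by (simp add: Q_def)
    next
      case c3
      have "Q a b = (if a = i \<and> b = j then P i j - {w} else if a = i' \<and> b = j then insert w (P i' j) else P a b)"
        unfolding Q_def by simp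
      then have "Q a b = P a b" using c3 by presburger
      moreover have "w \<notin> P a b" using u c3(1) by blast
      ultimately show ?thesis using True c3(2) by simp
    qed
  next
    case False
    then show ?thesis unfolding Q_def by auto
  qed
  have colQ: "Vcol k Q y = Vcol k P y" if "y\<in>{1..k}" for y
  proof -
    have "z \<in> Vcol k Q y \<longleftrightarrow> z \<in> Vcol k P y" for z
    proof (cases "z = w")
      case True
      have "w \<in> Vcol k P y \<longleftrightarrow> y = j"
      proof
        assume "w \<in> Vcol k P y"
        then obtain a where a: "a\<in>{1..k}" "w \<in> P a y" unfolding Vcol_def by auto
        show "y = j" using k2_uniq[OF k2 a(1) that ij(1,2) a(2) ij(3)] by simp
      next
        assume "y = j" then show "w \<in> Vcol k P y" using ij unfolding Vcol_def by auto
      qed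
      moreover have "w \<in> Vcol k Q y \<longleftrightarrow> y = j" using memQ[OF _ that] ij(4) unfolding Vcol_def by auto
      ultimately show ?thesis using True by simp
    next
      case False then show ?thesis using memQ[OF _ that] unfolding Vcol_def by auto
    qed
    then show ?thesis by blast
  qed
  have rowQ1: "a \<in> Vrow k Q x \<longleftrightarrow> a \<in> Vrow k P x" if "x\<in>{1..k}" "a \<noteq> w" for a x
    using memQ[OF that(1)] that(2) unfolding Vrow_def by auto
  have rowQ2: "w \<in> Vrow k Q x \<longleftrightarrow> x = i'" if "x\<in>{1..k}" for x
    using memQ[OF that] memQ[OF ij(4) ij(2)] ij unfolding Vrow_def by auto
  have rowP2: "w \<in> Vrow k P x \<longleftrightarrow> x = i" if "x\<in>{1..k}" for x
    using row_uniq[OF k2 that ij(1) _ wrow] wrow by auto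
  have k2Q: "k2_partition V k Q"
    unfolding k2_partition_def
  proof (intro conjI ballI impI)
    fix a b a' b' assume r: "a\<in>{1..k}" "b\<in>{1..k}" "a'\<in>{1..k}" "b'\<in>{1..k}" "(a,b) \<noteq> (a',b')"
    have "P a b \<inter> P a' b' = {}" using k2 r unfolding k2_partition_def by blast
    then show "Q a b \<inter> Q a' b' = {}" using memQ[OF r(1,2)] memQ[OF r(3,4)] r(5) by (auto split: if_splits)
  next
    show "(\<Union>a\<in>{1..k}. \<Union>b\<in>{1..k}. Q a b) = V"
    proof (intro equalityI subsetI)
      fix z assume "z \<in> (\<Union>a\<in>{1..k}. \<Union>b\<in>{1..k}. Q a b)"
      then obtain a b where r: "a\<in>{1..k}" "b\<in>{1..k}" "z \<in> Q a b" by auto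
      then show "z \<in> V" using memQ[OF r(1,2)] k2_sub[OF k2 r(1,2)] wV by (auto split: if_splits)
    next
      fix z assume "z \<in> V"
      then show "z \<in> (\<Union>a\<in>{1..k}. \<Union>b\<in>{1..k}. Q a b)"
      proof (cases "z = w")
        case True
        have "w \<in> Q i' j" using memQ[OF ij(4) ij(2)] by simp
        then show ?thesis using True ij(2,4) by blast
      next
        case False
        obtain a b where r: "a\<in>{1..k}" "b\<in>{1..k}" "z \<in> P a b" using k2_cover[OF k2 \<open>z\<in>V\<close>] by auto
        have "z \<in> Q a b" using memQ[OF r(1,2)] False r(3) by simp
        then show ?thesis using r(1,2) by blast
      qed
    qed
  qed
  define X where "X = {(a,b)\<in>E. a \<noteq> w \<and> (\<forall>x\<in>{1..k}. a \<in> Vrow k P x \<longrightarrow> b \<notin> Vcol k P x)}"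
  define Ow where "Ow y = {(a,b)\<in>E. a = w \<and> b \<notin> Vcol k P y}" for y
  have badQ: "bad_edges k Q E = X \<union> Ow i'"
  proof -
    have eq: "(\<forall>x\<in>{1..k}. a \<in> Vrow k Q x \<longrightarrow> b \<notin> Vcol k Q x) \<longleftrightarrow>
      (if a = w then b \<notin> Vcol k P i' else (\<forall>x\<in>{1..k}. a \<in> Vrow k P x \<longrightarrow> b \<notin> Vcol k P x))" for a b
    proof (cases "a = w")
      case True
      have "(\<forall>x\<in>{1..k}. w \<in> Vrow k Q x \<longrightarrow> b \<notin> Vcol k Q x) \<longleftrightarrow> b \<notin> Vcol k P i'"
      proof
        assume "\<forall>x\<in>{1..k}. w \<in> Vrow k Q x \<longrightarrow> b \<notin> Vcol k Q x"
        then show "b \<notin> Vcol k P i'" using rowQ2[OF ij(4)] colQ[OF ij(4)] ij(4) by blast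
      next
        assume "b \<notin> Vcol k P i'"
        then show "\<forall>x\<in>{1..k}. w \<in> Vrow k Q x \<longrightarrow> b \<notin> Vcol k Q x" using rowQ2 colQ by blast
      qed
      then show ?thesis using True by simp
    next
      case False
      then show ?thesis using rowQ1 colQ by auto
    qed
    show ?thesis unfolding bad_char[OF EV k2Q] X_def Ow_def eq by auto
  qed
  have badP: "bad_edges k P E = X \<union> Ow i"
  proof -
    have eq: "(\<forall>x\<in>{1..k}. a \<in> Vrow k P x \<longrightarrow> b \<notin> Vcol k P x) \<longleftrightarrow>
      (if a = w then b \<notin> Vcol k P i else (\<forall>x\<in>{1..k}. a \<in> Vrow k P x \<longrightarrow> b \<notin> Vcol k P x))" for a b
      using rowP2 ij(1) by auto
    show ?thesis unfolding bad_char[OF EV k2] X_def Ow_def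
      by (subst eq) auto
  qed
  have cardU: "card (X \<union> Ow y) = card X + card (Ow y)" for y
  proof (rule card_Un_disjoint)
    show "finite X" unfolding X_def by (rule finite_subset[OF _ finE]) auto
    show "finite (Ow y)" unfolding Ow_def by (rule finite_subset[OF _ finE]) auto
    show "X \<inter> Ow y = {}" unfolding X_def Ow_def by auto
  qed
  have cO: "card (Ow y) + outdeg_in E (Vcol k P y) w = d" if "y\<in>{1..k}" for y
    unfolding Ow_def by (rule out_split[OF reg wV col_sub[OF k2 that]])
  have less: "card (bad_edges k Q E) < card (bad_edges k P E)"
    unfolding badQ badP cardU using cO[OF ij(1)] cO[OF ij(4)] lt by linarith
  have ktgQ: "ktg_partition V E k \<tau> \<gamma> Q"
    unfolding ktg_partition_def
  proof (intro conjI ballI)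
    show "k2_partition V k Q" by fact
    show "real (card (bad_edges k Q E)) \<le> \<gamma> * real (card V) ^ 2"
      using less ktg unfolding ktg_partition_def by linarith
  next
    fix x assume x: "x\<in>{1..k}"
    show "\<tau> * real (card V) \<le> real (card (Vcol k Q x))"
      using colQ[OF x] ktg x unfolding ktg_partition_def by auto
    have "Vrow k P x - {w} \<subseteq> Vrow k Q x" using rowQ1[OF x] by auto
    moreover have "finite (Vrow k Q x)" by (rule finite_subset[OF row_sub[OF k2Q x] fin])
    ultimately have "card (Vrow k P x - {w}) \<le> card (Vrow k Q x)" by (rule card_mono[rotated])
    moreover have "card (Vrow k P x) \<le> card (Vrow k P x - {w}) + 1"
      by (rule card_minus1[OF finite_subset[OF row_sub[OF k2 x] fin]])
    ultimately show "\<tau> * real (card V) \<le> real (card (Vrow k Q x))"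
      using big x by (smt (verit) of_nat_1 of_nat_add of_nat_mono)
  qed
  then have "card (bad_edges k P E) \<le> card (bad_edges k Q E)"
    using ext unfolding extremal_ktg_partition_def by auto
  then show False using less by linarith
qed


lemma out_split':
  assumes "regular_digraph V E d" "w \<in> V" "S \<subseteq> V"
  shows "card {b\<in>V. (w,b)\<in>E \<and> b\<notin>S} + outdeg_in E S w = d"
proof -
  have fin: "finite V" using assms(1) unfolding regular_digraph_def digraph_def by auto
  have "{b\<in>V. (w,b)\<in>E} = {b\<in>V. (w,b)\<in>E \<and> b\<notin>S} \<union> {b\<in>S. (w,b)\<in>E}" using assms(3) by auto
  moreover have "card {b\<in>V. (w,b)\<in>E} = d" using assms(1,2) unfolding regular_digraph_def outdeg_in_def by auto
  moreover have "finite S" by (rule finite_subset[OF assms(3) fin])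
  moreover have "card ({b\<in>V. (w,b)\<in>E \<and> b\<notin>S} \<union> {b\<in>S. (w,b)\<in>E}) = card {b\<in>V. (w,b)\<in>E \<and> b\<notin>S} + card {b\<in>S. (w,b)\<in>E}"
    by (rule card_Un_disjoint) (use fin \<open>finite S\<close> in auto)
  ultimately have "d = card {b\<in>V. (w,b)\<in>E \<and> b\<notin>S} + card {b\<in>S. (w,b)\<in>E}"
    by simp
  then show ?thesis unfolding outdeg_in_def by simp
qed

lemma outdeg_le_card: "finite S \<Longrightarrow> outdeg_in E S w \<le> card S"
  unfolding outdeg_in_def by (rule card_mono) auto

lemma out_sum:
  assumes reg: "regular_digraph V E d" and k2: "k2_partition V k P" and v: "v \<in> V"
  shows "d = (\<Sum>x\<in>{1..k}. outdeg_in E (Vcol k P x) v)"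
proof -
  have fin: "finite V" using reg unfolding regular_digraph_def digraph_def by auto
  have "{u\<in>V. (v,u)\<in>E} = (\<Union>x\<in>{1..k}. {u\<in>Vcol k P x. (v,u)\<in>E})"
    using col_cover[OF k2] col_sub[OF k2] by blast
  moreover have "card (\<Union>x\<in>{1..k}. {u\<in>Vcol k P x. (v,u)\<in>E}) = (\<Sum>x\<in>{1..k}. card {u\<in>Vcol k P x. (v,u)\<in>E})"
    by (rule card_UN_disjoint) (use col_uniq[OF k2] finite_subset[OF col_sub[OF k2] fin] in \<open>auto\<close>)
  moreover have "card {u\<in>V. (v,u)\<in>E} = d" using reg v unfolding regular_digraph_def outdeg_in_def by auto
  ultimately show ?thesis unfolding outdeg_in_def by simp
qed

lemma out_part:
  assumes reg: "regular_digraph V E d" and ext: "extremal_ktg_partition V E k \<tau> \<gamma> P"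
    and big: "\<forall>x\<in>{1..k}. real (card (Vrow k P x)) \<ge> \<tau> * real (card V) + 1"
  shows "(\<forall>i\<in>{1..k}. \<forall>j\<in>{1..k}. \<forall>w\<in>P i j.
          (\<forall>i'\<in>{1..k}. outdeg_in E (Vcol k P i') w \<le> outdeg_in E (Vcol k P i) w) \<and>
          (\<forall>i'\<in>{1..k}. i' \<noteq> i \<longrightarrow> real (outdeg_in E (Vcol k P i') w) \<le> real d / 2)) \<and>
         (\<forall>v\<in>V. real (outdeg_in (good_edges k P E) V v) \<ge> real d / real k)"
proof -
  have EV: "E \<subseteq> V \<times> V" and fin: "finite V" using reg unfolding regular_digraph_def digraph_def by auto
  have ktg: "ktg_partition V E k \<tau> \<gamma> P" using ext unfolding extremal_ktg_partition_def by auto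
  have k2: "k2_partition V k P" using ktg unfolding ktg_partition_def by auto
  have A: "\<forall>i\<in>{1..k}. \<forall>j\<in>{1..k}. \<forall>w\<in>P i j.
          (\<forall>i'\<in>{1..k}. outdeg_in E (Vcol k P i') w \<le> outdeg_in E (Vcol k P i) w)"
    using move_out[OF reg ext big] by blast
  have B: "real (outdeg_in E (Vcol k P i') w) \<le> real d / 2"
    if "i\<in>{1..k}" "j\<in>{1..k}" "w\<in>P i j" "i'\<in>{1..k}" "i' \<noteq> i" for i j w i'
  proof -
    have wV: "w \<in> V" using k2_sub[OF k2 that(1,2)] that(3) by auto
    have "{u\<in>Vcol k P i'. (w,u)\<in>E} \<union> {u\<in>Vcol k P i. (w,u)\<in>E} \<subseteq> {u\<in>V. (w,u)\<in>E}"
      using col_sub[OF k2 that(1)] col_sub[OF k2 that(4)] by auto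
    then have "card ({u\<in>Vcol k P i'. (w,u)\<in>E} \<union> {u\<in>Vcol k P i. (w,u)\<in>E}) \<le> card {u\<in>V. (w,u)\<in>E}"
      by (rule card_mono[rotated]) (use fin in simp)
    moreover have "card {u\<in>V. (w,u)\<in>E} = d" using reg wV unfolding regular_digraph_def outdeg_in_def by auto
    ultimately have "card ({u\<in>Vcol k P i'. (w,u)\<in>E} \<union> {u\<in>Vcol k P i. (w,u)\<in>E}) \<le> d" by simp
    moreover have "card ({u\<in>Vcol k P i'. (w,u)\<in>E} \<union> {u\<in>Vcol k P i. (w,u)\<in>E})
       = outdeg_in E (Vcol k P i') w + outdeg_in E (Vcol k P i) w"
      unfolding outdeg_in_def
      by (rule card_Un_disjoint) (use col_sub[OF k2 that(1)] col_sub[OF k2 that(4)] fin finite_subset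
          col_uniq[OF k2 that(1) that(4)] that(5) finite_subset[OF col_sub[OF k2 that(1)] fin]
          finite_subset[OF col_sub[OF k2 that(4)] fin] in \<open>auto\<close>)
    ultimately show ?thesis using A that by fastforce
  qed
  have C: "real (outdeg_in (good_edges k P E) V v) \<ge> real d / real k" if v: "v \<in> V" for v
  proof -
    obtain i j where ij: "i\<in>{1..k}" "j\<in>{1..k}" "v \<in> P i j" using k2_cover[OF k2 v] by auto
    have vr: "v \<in> Vrow k P i" using ij unfolding Vrow_def by auto
    have "d = (\<Sum>x\<in>{1..k}. outdeg_in E (Vcol k P x) v)" by (rule out_sum[OF reg k2 v])
    also have "\<dots> \<le> (\<Sum>x\<in>{1..k}. outdeg_in E (Vcol k P i) v)"
      by (rule sum_mono) (use A ij in auto)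
    also have "\<dots> = k * outdeg_in E (Vcol k P i) v" by simp
    finally have "real d \<le> real k * real (outdeg_in E (Vcol k P i) v)" by (metis of_nat_le_iff of_nat_mult)
    moreover have "k > 0" using ij by auto
    ultimately show ?thesis using good_out[OF EV k2 ij(1) vr]
      by (simp add: divide_le_eq mult.commute)
  qed
  show ?thesis using A B C by blast
qed

lemma size_col:
  assumes reg: "regular_digraph V E d" and ktg: "ktg_partition V E k \<tau> \<gamma> P"
    and dn: "real d \<ge> \<alpha> * real (card V)" and a: "0 < \<alpha>" and t: "0 < \<tau>" "\<tau> \<le> \<alpha>/4"
    and g: "\<gamma> \<le> \<tau>*\<alpha>/4" and n: "real (card V) \<ge> 4/\<alpha>" and x: "x\<in>{1..k}"
  shows "real (card (Vcol k P x)) \<ge> \<tau> * real (card V) + 1"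
proof (rule ccontr)
  assume "\<not> ?thesis"
  then have cs: "real (card (Vcol k P x)) < \<tau> * real (card V) + 1" by simp
  define N where "N = real (card V)"
  define c where "c = card (Vcol k P x)"
  define r where "r = card (Vrow k P x)"
  have EV: "E \<subseteq> V \<times> V" and fin: "finite V" using reg unfolding regular_digraph_def digraph_def by auto
  have k2: "k2_partition V k P" using ktg unfolding ktg_partition_def by auto
  have Npos: "N > 0" using n a unfolding N_def by (smt (verit) divide_pos_pos)
  have aN: "\<alpha> * N \<ge> 4" using n a unfolding N_def by (simp add: divide_le_eq mult.commute)
  have rge: "real r \<ge> \<tau> * N" using ktg x unfolding ktg_partition_def r_def N_def by auto
  have dc: "real d - real c \<ge> \<alpha> * N / 2"
  proof -
    have "\<tau> * N \<le> \<alpha> * N / 4" using t Npos by (simp add: mult_right_mono)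
    then show ?thesis using cs dn aN unfolding N_def c_def by linarith
  qed
  moreover have "0 < \<alpha> * N" using a Npos by simp
  ultimately have "real c \<le> real d" by linarith
  then have cd: "c \<le> d" by simp
  define S where "S = Sigma (Vrow k P x) (\<lambda>v. {u\<in>V. (v,u)\<in>E \<and> u \<notin> Vcol k P x})"
  have Sbad: "S \<subseteq> bad_edges k P E"
    unfolding bad_char[OF EV k2] S_def using row_uniq[OF k2 _ x] by blast
  have finbad: "finite (bad_edges k P E)"
  proof (rule finite_subset)
    show "bad_edges k P E \<subseteq> E" unfolding bad_edges_def edges_between_def by auto
    show "finite E" using EV fin by (meson finite_SigmaI finite_subset)
  qed
  have finrow: "finite (Vrow k P x)" by (rule finite_subset[OF row_sub[OF k2 x] fin])
  have "card S = (\<Sum>v\<in>Vrow k P x. card {u\<in>V. (v,u)\<in>E \<and> u \<notin> Vcol k P x})"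
    unfolding S_def by (rule card_SigmaI) (use finrow fin in auto)
  also have "\<dots> \<ge> (\<Sum>v\<in>Vrow k P x. d - c)"
  proof (rule sum_mono)
    fix v assume v: "v \<in> Vrow k P x"
    have "v \<in> V" using v row_sub[OF k2 x] by auto
    then have "card {u\<in>V. (v,u)\<in>E \<and> u \<notin> Vcol k P x} + outdeg_in E (Vcol k P x) v = d"
      by (rule out_split'[OF reg _ col_sub[OF k2 x]])
    moreover have "outdeg_in E (Vcol k P x) v \<le> c"
      unfolding c_def by (rule outdeg_le_card) (use col_sub[OF k2 x] fin finite_subset in blast)
    ultimately show "d - c \<le> card {u\<in>V. (v,u)\<in>E \<and> u \<notin> Vcol k P x}" by linarith
  qed
  finally have "card S \<ge> r * (d - c)" unfolding r_def by simp
  moreover have "card S \<le> card (bad_edges k P E)" by (rule card_mono[OF finbad Sbad])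
  ultimately have "real (card (bad_edges k P E)) \<ge> real r * (real d - real c)"
    using cd by (metis le_trans of_nat_diff of_nat_le_iff of_nat_mult)
  moreover have "real r * (real d - real c) \<ge> (\<tau> * N) * (\<alpha> * N / 2)"
    by (rule mult_mono) (use rge dc t Npos in auto)
  moreover have "real (card (bad_edges k P E)) \<le> \<gamma> * N^2" using ktg unfolding ktg_partition_def N_def by auto
  moreover have "\<gamma> * N^2 \<le> (\<tau>*\<alpha>/4) * N^2" using g by (intro mult_right_mono) auto
  moreover have "(\<tau>*\<alpha>/4) * N^2 < (\<tau> * N) * (\<alpha> * N / 2)"
    using t a Npos by (simp add: power2_eq_square algebra_simps)
  ultimately show False by linarith
qed


theorem proposition3p10:
  "\<exists>\<alpha>0>0. \<forall>\<alpha>. 0 < \<alpha> \<and> \<alpha> \<le> \<alpha>0 \<longrightarrow>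
   (\<exists>\<tau>0>0. \<forall>\<tau>. 0 < \<tau> \<and> \<tau> \<le> \<tau>0 \<longrightarrow>
   (\<exists>\<gamma>0>0. \<forall>\<gamma>. 0 < \<gamma> \<and> \<gamma> \<le> \<gamma>0 \<longrightarrow>
   (\<exists>n0::nat. \<forall>(V::'a set) E (d::nat) (k::nat) P.
      card V \<ge> n0 \<and> regular_digraph V E d \<and> real d \<ge> \<alpha> * real (card V) \<and>
      extremal_ktg_partition V E k \<tau> \<gamma> P \<longrightarrow>
      (\<forall>i\<in>{1..k}. \<forall>j\<in>{1..k}. \<forall>w\<in>P i j.
         (\<forall>i'\<in>{1..k}. outdeg_in E (Vcol k P i') w \<le> outdeg_in E (Vcol k P i) w) \<and>
         (\<forall>j'\<in>{1..k}. indeg_in E (Vrow k P j') w \<le> indeg_in E (Vrow k P j) w) \<and>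
         (\<forall>i'\<in>{1..k}. i' \<noteq> i \<longrightarrow> real (outdeg_in E (Vcol k P i') w) \<le> real d / 2) \<and>
         (\<forall>j'\<in>{1..k}. j' \<noteq> j \<longrightarrow> real (indeg_in E (Vrow k P j') w) \<le> real d / 2)) \<and>
      (\<forall>v\<in>V. real (outdeg_in (good_edges k P E) V v) \<ge> real d / real k \<and>
              real (indeg_in (good_edges k P E) V v) \<ge> real d / real k))))"
proof (rule exI[of _ 1], intro conjI allI impI)
  fix \<alpha> :: real assume a: "0 < \<alpha> \<and> \<alpha> \<le> 1"
  show "\<exists>\<tau>0>0. \<forall>\<tau>. 0 < \<tau> \<and> \<tau> \<le> \<tau>0 \<longrightarrow>
   (\<exists>\<gamma>0>0. \<forall>\<gamma>. 0 < \<gamma> \<and> \<gamma> \<le> \<gamma>0 \<longrightarrow>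
   (\<exists>n0::nat. \<forall>(V::'a set) E (d::nat) (k::nat) P.
      card V \<ge> n0 \<and> regular_digraph V E d \<and> real d \<ge> \<alpha> * real (card V) \<and>
      extremal_ktg_partition V E k \<tau> \<gamma> P \<longrightarrow>
      (\<forall>i\<in>{1..k}. \<forall>j\<in>{1..k}. \<forall>w\<in>P i j.
         (\<forall>i'\<in>{1..k}. outdeg_in E (Vcol k P i') w \<le> outdeg_in E (Vcol k P i) w) \<and>
         (\<forall>j'\<in>{1..k}. indeg_in E (Vrow k P j') w \<le> indeg_in E (Vrow k P j) w) \<and>
         (\<forall>i'\<in>{1..k}. i' \<noteq> i \<longrightarrow> real (outdeg_in E (Vcol k P i') w) \<le> real d / 2) \<and>
         (\<forall>j'\<in>{1..k}. j' \<noteq> j \<longrightarrow> real (indeg_in E (Vrow k P j') w) \<le> real d / 2)) \<and>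
      (\<forall>v\<in>V. real (outdeg_in (good_edges k P E) V v) \<ge> real d / real k \<and>
              real (indeg_in (good_edges k P E) V v) \<ge> real d / real k)))"
  proof (rule exI[of _ "\<alpha>/4"], intro conjI allI impI)
    show "0 < \<alpha>/4" using a by simp
    fix \<tau> :: real assume t: "0 < \<tau> \<and> \<tau> \<le> \<alpha>/4"
    show "\<exists>\<gamma>0>0. \<forall>\<gamma>. 0 < \<gamma> \<and> \<gamma> \<le> \<gamma>0 \<longrightarrow>
   (\<exists>n0::nat. \<forall>(V::'a set) E (d::nat) (k::nat) P.
      card V \<ge> n0 \<and> regular_digraph V E d \<and> real d \<ge> \<alpha> * real (card V) \<and>
      extremal_ktg_partition V E k \<tau> \<gamma> P \<longrightarrow>
      (\<forall>i\<in>{1..k}. \<forall>j\<in>{1..k}. \<forall>w\<in>P i j.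
         (\<forall>i'\<in>{1..k}. outdeg_in E (Vcol k P i') w \<le> outdeg_in E (Vcol k P i) w) \<and>
         (\<forall>j'\<in>{1..k}. indeg_in E (Vrow k P j') w \<le> indeg_in E (Vrow k P j) w) \<and>
         (\<forall>i'\<in>{1..k}. i' \<noteq> i \<longrightarrow> real (outdeg_in E (Vcol k P i') w) \<le> real d / 2) \<and>
         (\<forall>j'\<in>{1..k}. j' \<noteq> j \<longrightarrow> real (indeg_in E (Vrow k P j') w) \<le> real d / 2)) \<and>
      (\<forall>v\<in>V. real (outdeg_in (good_edges k P E) V v) \<ge> real d / real k \<and>
              real (indeg_in (good_edges k P E) V v) \<ge> real d / real k))"
    proof (rule exI[of _ "\<tau>*\<alpha>/4"], intro conjI allI impI)
      show "0 < \<tau>*\<alpha>/4" using a t by simp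
      fix \<gamma> :: real assume g: "0 < \<gamma> \<and> \<gamma> \<le> \<tau>*\<alpha>/4"
      show "\<exists>n0::nat. \<forall>(V::'a set) E (d::nat) (k::nat) P.
      card V \<ge> n0 \<and> regular_digraph V E d \<and> real d \<ge> \<alpha> * real (card V) \<and>
      extremal_ktg_partition V E k \<tau> \<gamma> P \<longrightarrow>
      (\<forall>i\<in>{1..k}. \<forall>j\<in>{1..k}. \<forall>w\<in>P i j.
         (\<forall>i'\<in>{1..k}. outdeg_in E (Vcol k P i') w \<le> outdeg_in E (Vcol k P i) w) \<and>
         (\<forall>j'\<in>{1..k}. indeg_in E (Vrow k P j') w \<le> indeg_in E (Vrow k P j) w) \<and>
         (\<forall>i'\<in>{1..k}. i' \<noteq> i \<longrightarrow> real (outdeg_in E (Vcol k P i') w) \<le> real d / 2) \<and>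
         (\<forall>j'\<in>{1..k}. j' \<noteq> j \<longrightarrow> real (indeg_in E (Vrow k P j') w) \<le> real d / 2)) \<and>
      (\<forall>v\<in>V. real (outdeg_in (good_edges k P E) V v) \<ge> real d / real k \<and>
              real (indeg_in (good_edges k P E) V v) \<ge> real d / real k)"
      proof (rule exI[of _ "nat \<lceil>4/\<alpha>\<rceil>"], intro allI impI)
        fix V :: "'a set" and E d k P
        assume H: "card V \<ge> nat \<lceil>4/\<alpha>\<rceil> \<and> regular_digraph V E d \<and> real d \<ge> \<alpha> * real (card V) \<and>
          extremal_ktg_partition V E k \<tau> \<gamma> P"
        then have reg: "regular_digraph V E d" and dn: "real d \<ge> \<alpha> * real (card V)"
          and ext: "extremal_ktg_partition V E k \<tau> \<gamma> P" by auto
        have n: "real (card V) \<ge> 4/\<alpha>" using H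
          by (metis (mono_tags) ceiling_le_iff le_nat_iff nat_le_iff of_nat_le_iff of_int_of_nat_eq le_of_int_ceiling order_trans)
        have ktg: "ktg_partition V E k \<tau> \<gamma> P" using ext unfolding extremal_ktg_partition_def by auto
        have colbig: "\<forall>x\<in>{1..k}. real (card (Vcol k P x)) \<ge> \<tau> * real (card V) + 1"
          using size_col[OF reg ktg dn _ _ _ _ n] a t g by auto
        have rowbig: "\<forall>x\<in>{1..k}. real (card (Vrow k P x)) \<ge> \<tau> * real (card V) + 1"
          using size_col[of V "E\<inverse>" d k \<tau> \<gamma> "tr P" \<alpha>] reg ktg dn n a t g by auto
        have O: "(\<forall>i\<in>{1..k}. \<forall>j\<in>{1..k}. \<forall>w\<in>P i j.
          (\<forall>i'\<in>{1..k}. outdeg_in E (Vcol k P i') w \<le> outdeg_in E (Vcol k P i) w) \<and>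
          (\<forall>i'\<in>{1..k}. i' \<noteq> i \<longrightarrow> real (outdeg_in E (Vcol k P i') w) \<le> real d / 2)) \<and>
         (\<forall>v\<in>V. real (outdeg_in (good_edges k P E) V v) \<ge> real d / real k)"
          by (rule out_part[OF reg ext rowbig])
        have I0: "(\<forall>i\<in>{1..k}. \<forall>j\<in>{1..k}. \<forall>w\<in>tr P i j.
          (\<forall>i'\<in>{1..k}. outdeg_in (E\<inverse>) (Vcol k (tr P) i') w \<le> outdeg_in (E\<inverse>) (Vcol k (tr P) i) w) \<and>
          (\<forall>i'\<in>{1..k}. i' \<noteq> i \<longrightarrow> real (outdeg_in (E\<inverse>) (Vcol k (tr P) i') w) \<le> real d / 2)) \<and>
         (\<forall>v\<in>V. real (outdeg_in (good_edges k (tr P) (E\<inverse>)) V v) \<ge> real d / real k)"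
          by (rule out_part[of V "E\<inverse>" d k \<tau> \<gamma> "tr P"]) (use reg ext colbig in auto)
        then have I: "(\<forall>i\<in>{1..k}. \<forall>j\<in>{1..k}. \<forall>w\<in>P j i.
          (\<forall>i'\<in>{1..k}. indeg_in E (Vrow k P i') w \<le> indeg_in E (Vrow k P i) w) \<and>
          (\<forall>i'\<in>{1..k}. i' \<noteq> i \<longrightarrow> real (indeg_in E (Vrow k P i') w) \<le> real d / 2)) \<and>
         (\<forall>v\<in>V. real (indeg_in (good_edges k P E) V v) \<ge> real d / real k)"
          by (simp add: indeg_conv tr_app)
        show "(\<forall>i\<in>{1..k}. \<forall>j\<in>{1..k}. \<forall>w\<in>P i j.
         (\<forall>i'\<in>{1..k}. outdeg_in E (Vcol k P i') w \<le> outdeg_in E (Vcol k P i) w) \<and>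
         (\<forall>j'\<in>{1..k}. indeg_in E (Vrow k P j') w \<le> indeg_in E (Vrow k P j) w) \<and>
         (\<forall>i'\<in>{1..k}. i' \<noteq> i \<longrightarrow> real (outdeg_in E (Vcol k P i') w) \<le> real d / 2) \<and>
         (\<forall>j'\<in>{1..k}. j' \<noteq> j \<longrightarrow> real (indeg_in E (Vrow k P j') w) \<le> real d / 2)) \<and>
      (\<forall>v\<in>V. real (outdeg_in (good_edges k P E) V v) \<ge> real d / real k \<and>
              real (indeg_in (good_edges k P E) V v) \<ge> real d / real k)"
          using O I by blast
      qed
    qed
  qed
qed (simp)

end
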